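(* Let $N\ge 2$, let $K\in\mathbb{R}^{N\times N}$ be symmetric positive semi-definite, let $\lambda>0$ and $y\in\mathbb{R}^N$. Set $A:=(K+\lambda I)^{-1}$, $\alpha=\alpha(K):=Ay$, $\beta:=A\alpha$, and $\mathcal{L}_{\mathrm{tr}}(K):=\lambda^2\|\alpha(K)\|_2^2$. For $i\neq j$ let $E_{ij}:=e_ie_j^\top+e_je_i^\top$, and regard $\mathcal{L}_{\mathrm{tr}}$ as a function of the upper-triangular entries of the symmetric matrix $K$, so that a change of the entry $K_{ij}$ ($i<j$) by $t$ corresponds to $K\mapsto K+tE_{ij}$. Then for $i\neq j$: (1) $g_{ij}:=\dfrac{\partial\mathcal{L}_{\mathrm{tr}}}{\partial K_{ij}}=-2\lambda^2(\beta_i\alpha_j+\beta_j\alpha_i)$; (2) the diagonal Hessian entry $H_{ij}:=\dfrac{\partial^2\mathcal{L}_{\mathrm{tr}}}{\partial K_{ij}^2}$ decomposes as $H_{ij}=\tilde H_{ij}+R_{ij}$, where $\tilde H_{ij}:=2\lambda^2\|AE_{ij}\alpha\|_2^2\ge 0$ and $R_{ij}=4\lambda^2\bigl[A_{ij}(\beta_i\alpha_j+\beta_j\alpha_i)+A_{ii}\beta_j\alpha_j+A_{jj}\beta_i\alpha_i\bigr]$; (3) $|R_{ij}|\le 8\|y\|_2\lambda^{-1}(|\alpha_i|+|\alpha_j|)$; (4) both $\tilde H_{ij}$ and $R_{ij}$ vanish whenever $\alpha_i=\alpha_j=0$.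
   Context: $e_i$ denotes the $i$-th standard basis vector of $\mathbb{R}^N$. $\mathcal{L}_{\mathrm{tr}}$ is the training squared loss $\|y-K\alpha\|^2$ of kernel ridge regression, which equals $\lambda^2\|\alpha\|^2$. *)

theory Defs
  imports "HOL-Analysis.Analysis"
begin

definition krr_A :: "real \<Rightarrow> real^'n^'n \<Rightarrow> real^'n^'n" where
  "krr_A lam K = matrix_inv (K + lam *\<^sub>R mat 1)"

definition krr_alpha :: "real \<Rightarrow> real^'n \<Rightarrow> real^'n^'n \<Rightarrow> real^'n" where
  "krr_alpha lam y K = krr_A lam K *v y"

definition krr_beta :: "real \<Rightarrow> real^'n \<Rightarrow> real^'n^'n \<Rightarrow> real^'n" where
  "krr_beta lam y K = krr_A lam K *v krr_alpha lam y K"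

definition L_tr :: "real \<Rightarrow> real^'n \<Rightarrow> real^'n^'n \<Rightarrow> real" where
  "L_tr lam y K = lam\<^sup>2 * (norm (krr_alpha lam y K))\<^sup>2"

definition Emat :: "'n \<Rightarrow> 'n \<Rightarrow> real^'n^'n" where
  "Emat i j = (\<chi> a b. (if a = i \<and> b = j then 1 else 0) + (if a = j \<and> b = i then 1 else 0))"

definition psd_sym :: "real^'n^'n \<Rightarrow> bool" where
  "psd_sym K \<longleftrightarrow> transpose K = K \<and> (\<forall>x. 0 \<le> x \<bullet> (K *v x))"

definition H_tilde :: "real \<Rightarrow> real^'n \<Rightarrow> real^'n^'n \<Rightarrow> 'n \<Rightarrow> 'n \<Rightarrow> real" where
  "H_tilde lam y K i j = 2 * lam\<^sup>2 * (norm (krr_A lam K *v (Emat i j *v krr_alpha lam y K)))\<^sup>2"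

definition R_term :: "real \<Rightarrow> real^'n \<Rightarrow> real^'n^'n \<Rightarrow> 'n \<Rightarrow> 'n \<Rightarrow> real" where
  "R_term lam y K i j = (let A = krr_A lam K; a = krr_alpha lam y K; b = krr_beta lam y K in
     4 * lam\<^sup>2 * (A $ i $ j * (b $ i * a $ j + b $ j * a $ i)
                  + A $ i $ i * b $ j * a $ j + A $ j $ j * b $ i * a $ i))"

end

theory Submission
  imports Defs
begin

lemma Emat_mult:
  assumes "i \<noteq> j"
  shows "Emat i j *v z = (\<chi> a. (if a = i then z$j else 0) + (if a = j then z$i else 0))"
proof -
  have "(Emat i j *v z)$a = (if a = i then z$j else 0) + (if a = j then z$i else 0)" for a
  proof -
    have "(Emat i j *v z)$a = (\<Sum>b\<in>UNIV. (if b = j then (if a = i then z$j else 0) else 0)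
                                       + (if b = i then (if a = j then z$i else 0) else 0))"
      unfolding matrix_vector_mult_def Emat_def vec_lambda_beta
      by (rule sum.cong) auto
    also have "\<dots> = (if a = i then z$j else 0) + (if a = j then z$i else 0)"
      by (simp only: sum.distrib sum.delta finite UNIV_I if_True)
    finally show ?thesis .
  qed
  then show ?thesis by (simp add: vec_eq_iff)
qed

lemma Emat_inner:
  fixes u v :: "real^'n"
  assumes "i \<noteq> j"
  shows "u \<bullet> (Emat i j *v v) = u$i * v$j + u$j * v$i"
proof -
  have "u \<bullet> (Emat i j *v v) = (\<Sum>a\<in>UNIV. (if a = i then u$i * v$j else 0) + (if a = j then u$j * v$i else 0))"
    using assms by (auto simp: Emat_mult inner_vec_def intro!: sum.cong)
  also have "\<dots> = u$i * v$j + u$j * v$i" by (simp add: sum.distrib)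
  finally show ?thesis .
qed

lemma Emat_sym:
  fixes u v :: "real^'n"
  assumes "i \<noteq> j"
  shows "(Emat i j *v u) \<bullet> v = u \<bullet> (Emat i j *v v)"
  using assms by (simp add: Emat_inner inner_commute[of "Emat i j *v u"])

lemma Emat_quad:
  fixes z :: "real^'n"
  assumes "i \<noteq> j"
  shows "\<bar>z \<bullet> (Emat i j *v z)\<bar> \<le> (norm z)\<^sup>2"
proof -
  have "(norm z)\<^sup>2 = (\<Sum>a\<in>UNIV. (z$a)\<^sup>2)"
    unfolding power2_norm_eq_inner inner_vec_def by (simp add: power2_eq_square)
  also have "\<dots> \<ge> (\<Sum>a\<in>{i,j}. (z$a)\<^sup>2)"
    by (rule sum_mono2) auto
  finally have "(norm z)\<^sup>2 \<ge> (z$i)\<^sup>2 + (z$j)\<^sup>2" using assms by simp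
  moreover have "\<bar>2 * (z$i * z$j)\<bar> \<le> (z$i)\<^sup>2 + (z$j)\<^sup>2"
  proof -
    have a: "2 * (z$i) * (z$j) \<le> (z$i)\<^sup>2 + (z$j)\<^sup>2" by (rule sum_squares_bound)
    have b: "2 * (z$i) * (- (z$j)) \<le> (z$i)\<^sup>2 + (- (z$j))\<^sup>2" by (rule sum_squares_bound)
    show ?thesis using a b by (simp add: abs_le_iff mult.assoc)
  qed
  moreover have e: "z \<bullet> (Emat i j *v z) = 2 * (z$i * z$j)"
    using assms by (simp add: Emat_inner mult.commute)
  ultimately show ?thesis unfolding e by linarith
qed

lemma mv_E_entry:
  fixes M :: "real^'n^'n"
  assumes "i \<noteq> j"
  shows "(M *v (Emat i j *v v))$p = M$p$i * v$j + M$p$j * v$i"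
proof -
  have "(M *v (Emat i j *v v))$p = (\<Sum>k\<in>UNIV. (if k = i then M$p$i * v$j else 0) + (if k = j then M$p$j * v$i else 0))"
    unfolding Emat_mult[OF assms] using assms by (auto simp: matrix_vector_mult_def intro!: sum.cong)
  also have "\<dots> = M$p$i * v$j + M$p$j * v$i" by (simp add: sum.distrib)
  finally show ?thesis .
qed

lemma mv_axis: "((M::real^'n^'n) *v axis q 1)$p = M$p$q"
proof -
  have "((M::real^'n^'n) *v axis q 1)$p = (\<Sum>k\<in>UNIV. if k = q then M$p$q else 0)"
  proof -
    have h: "\<And>k. M$p$k * (if k = q then 1 else 0) = (if k = q then M$p$q else 0)" by simp
    show ?thesis unfolding matrix_vector_mult_def axis_def by (simp only: vec_lambda_beta h)
  qed
  also have "\<dots> = M$p$q" by simp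
  finally show ?thesis .
qed

lemma mv_uminus: "(M::real^'n^'m) *v (- x) = - (M *v x)"
  by (simp add: matrix_vector_mult_def vec_eq_iff sum_negf)

lemma prod_bound:
  fixes x u v c B :: real
  assumes "\<bar>x\<bar> \<le> c" "\<bar>u\<bar> \<le> B"
  shows "\<bar>x * (u * v)\<bar> \<le> c * B * \<bar>v\<bar>"
proof -
  have "\<bar>x * (u * v)\<bar> = \<bar>x\<bar> * \<bar>u\<bar> * \<bar>v\<bar>" by (simp add: abs_mult)
  also have "\<dots> \<le> c * B * \<bar>v\<bar>"
    by (intro mult_right_mono mult_mono assms) (use assms in auto)
  finally show ?thesis .
qed

context
  fixes K :: "real^'n^'n" and lam :: real and i j :: 'n
  assumes psd: "psd_sym K" and lam: "lam > 0" and ij: "i \<noteq> j"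
begin

definition "Mt t = K + t *\<^sub>R Emat i j + lam *\<^sub>R mat 1"
definition "At t = matrix_inv (Mt t)"

lemma Mt_apply: "Mt t *v z = K *v z + t *\<^sub>R (Emat i j *v z) + lam *\<^sub>R z"
  by (simp add: Mt_def matrix_vector_mult_add_rdistrib flip: scaleR_matrix_vector_assoc)

lemma K_sym: "u \<bullet> (K *v v) = (K *v u) \<bullet> v"
proof -
  have "transpose K = K" using psd by (simp add: psd_sym_def)
  then have "u v* K = K *v u" by (metis transpose_matrix_vector)
  then show ?thesis by (metis dot_lmul_matrix)
qed

lemma Mt_sym: "u \<bullet> (Mt t *v v) = (Mt t *v u) \<bullet> v"
  unfolding Mt_apply inner_add_right inner_add_left inner_scaleR_right inner_scaleR_left K_sym Emat_sym[OF ij]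
  by (rule refl)

lemma Mt_lower:
  assumes "\<bar>t\<bar> \<le> lam / 2"
  shows "lam / 2 * norm z \<le> norm (Mt t *v z)"
proof -
  have "0 \<le> z \<bullet> (K *v z)" using psd by (simp add: psd_sym_def)
  have q: "\<bar>z \<bullet> (Emat i j *v z)\<bar> \<le> (norm z)\<^sup>2" by (rule Emat_quad[OF ij])
  have "z \<bullet> (Mt t *v z) = z \<bullet> (K *v z) + t * (z \<bullet> (Emat i j *v z)) + lam * (norm z)\<^sup>2"
    by (simp add: Mt_apply inner_add_right power2_norm_eq_inner)
  moreover have "\<bar>t * (z \<bullet> (Emat i j *v z))\<bar> \<le> lam / 2 * (norm z)\<^sup>2"
    unfolding abs_mult by (rule mult_mono[OF assms q]) (use lam in auto)
  moreover have "z \<bullet> (Mt t *v z) \<le> norm z * norm (Mt t *v z)"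
    by (rule order_trans[OF abs_ge_self Cauchy_Schwarz_ineq2])
  ultimately have "lam / 2 * (norm z)\<^sup>2 \<le> norm z * norm (Mt t *v z)"
    using \<open>0 \<le> z \<bullet> (K *v z)\<close> by linarith
  then show ?thesis
    by (cases "norm z = 0") (auto simp: power2_eq_square)
qed

lemma Mt_lower0: "lam * norm z \<le> norm (Mt 0 *v z)"
proof -
  have "0 \<le> z \<bullet> (K *v z)" using psd by (simp add: psd_sym_def)
  have "z \<bullet> (Mt 0 *v z) = z \<bullet> (K *v z) + lam * (norm z)\<^sup>2"
    by (simp add: Mt_apply inner_add_right power2_norm_eq_inner)
  moreover have "z \<bullet> (Mt 0 *v z) \<le> norm z * norm (Mt 0 *v z)"
    by (rule order_trans[OF abs_ge_self Cauchy_Schwarz_ineq2])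
  ultimately have "lam * (norm z)\<^sup>2 \<le> norm z * norm (Mt 0 *v z)"
    using \<open>0 \<le> z \<bullet> (K *v z)\<close> by linarith
  then show ?thesis
    by (cases "norm z = 0") (auto simp: power2_eq_square)
qed

lemma Mt_inv:
  assumes "\<bar>t\<bar> \<le> lam / 2"
  shows "At t ** Mt t = mat 1" "Mt t ** At t = mat 1"
proof -
  have "inj ((*v) (Mt t))"
  proof (rule injI)
    fix x z assume "Mt t *v x = Mt t *v z"
    then have "Mt t *v (x - z) = 0" by (simp add: matrix_vector_mult_diff_distrib)
    then have "lam / 2 * norm (x - z) \<le> 0" using Mt_lower[OF assms, of "x - z"] by simp
    then show "x = z" using lam by (simp add: mult_le_0_iff)
  qed
  then obtain B where B: "B ** Mt t = mat 1" using matrix_left_invertible_injective by blast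
  then have "Mt t ** B = mat 1" using matrix_left_right_inverse by blast
  with B have "\<exists>A'. Mt t ** A' = mat 1 \<and> A' ** Mt t = mat 1" by blast
  then have "Mt t ** At t = mat 1 \<and> At t ** Mt t = mat 1"
    unfolding At_def matrix_inv_def by (rule someI_ex)
  then show "At t ** Mt t = mat 1" "Mt t ** At t = mat 1" by auto
qed

lemma At_left: "\<bar>t\<bar> \<le> lam / 2 \<Longrightarrow> At t *v (Mt t *v z) = z"
  by (simp add: matrix_vector_mul_assoc Mt_inv)

lemma At_right: "\<bar>t\<bar> \<le> lam / 2 \<Longrightarrow> Mt t *v (At t *v z) = z"
  by (simp add: matrix_vector_mul_assoc Mt_inv)

lemma At_bound: "\<bar>t\<bar> \<le> lam / 2 \<Longrightarrow> norm (At t *v x) \<le> 2 / lam * norm x"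
  using Mt_lower[of t "At t *v x"] At_right[of t x] lam by (simp add: field_simps)

lemma At_bound0: "norm (At 0 *v x) \<le> norm x / lam"
  using Mt_lower0[of "At 0 *v x"] At_right[of 0 x] lam by (simp add: field_simps)

lemma At_sym:
  assumes "\<bar>t\<bar> \<le> lam / 2"
  shows "u \<bullet> (At t *v v) = (At t *v u) \<bullet> v"
proof -
  have "u \<bullet> (At t *v v) = (Mt t *v (At t *v u)) \<bullet> (At t *v v)" using At_right[OF assms] by simp
  also have "\<dots> = (At t *v u) \<bullet> (Mt t *v (At t *v v))" by (simp add: Mt_sym)
  also have "\<dots> = (At t *v u) \<bullet> v" using At_right[OF assms] by simp
  finally show ?thesis .
qed

lemma resolvent:
  assumes "\<bar>t\<bar> \<le> lam / 2" "\<bar>s\<bar> \<le> lam / 2"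
  shows "At t *v w - At s *v w = - (t - s) *\<^sub>R (At t *v (Emat i j *v (At s *v w)))"
proof -
  let ?z1 = "At t *v w" and ?z2 = "At s *v w"
  have "Mt t *v (?z1 - ?z2) = (s - t) *\<^sub>R (Emat i j *v ?z2)"
  proof -
    have "Mt t *v (?z1 - ?z2) = w - Mt t *v ?z2"
      using At_right[OF assms(1)] by (simp add: matrix_vector_mult_diff_distrib)
    moreover have "w = Mt s *v ?z2" using At_right[OF assms(2)] by simp
    moreover have "Mt s *v x - Mt t *v x = (s - t) *\<^sub>R (Emat i j *v x)" for x
      by (simp add: Mt_apply algebra_simps)
    ultimately show ?thesis by metis
  qed
  then have "?z1 - ?z2 = At t *v ((s - t) *\<^sub>R (Emat i j *v ?z2))"
    using At_left[OF assms(1)] by metis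
  then show ?thesis by (simp add: matrix_vector_mult_scaleR)
qed

lemma ev_near:
  assumes "\<bar>s\<bar> < lam / 2"
  shows "eventually (\<lambda>t. \<bar>t\<bar> < lam / 2) (at s)"
proof -
  have "open (ball (0::real) (lam/2))" by simp
  moreover have "s \<in> ball 0 (lam/2)" using assms by (simp add: dist_real_def)
  ultimately have "eventually (\<lambda>t. t \<in> ball 0 (lam/2)) (at s)"
    by (rule eventually_at_in_open')
  then show ?thesis by (simp add: dist_real_def)
qed

lemma At_cont:
  assumes "\<bar>s\<bar> < lam / 2"
  shows "((\<lambda>t. At t *v w) \<longlongrightarrow> At s *v w) (at s)"
proof -
  let ?C = "2 / lam * norm (Emat i j *v (At s *v w))"
  have "eventually (\<lambda>t. norm (At t *v w - At s *v w) \<le> \<bar>t - s\<bar> * ?C) (at s)"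
    using ev_near[OF assms]
  proof eventually_elim
    case (elim t)
    then have "norm (At t *v w - At s *v w) = \<bar>t - s\<bar> * norm (At t *v (Emat i j *v (At s *v w)))"
      using resolvent[of t s w] assms by (simp add: abs_minus_commute)
    also have "\<dots> \<le> \<bar>t - s\<bar> * ?C"
      using At_bound[of t] elim by (intro mult_left_mono) auto
    finally show ?case .
  qed
  moreover have "((\<lambda>t. \<bar>t - s\<bar> * ?C) \<longlongrightarrow> 0) (at s)"
    by (rule tendsto_eq_intros refl | simp)+
  ultimately have "((\<lambda>t. At t *v w - At s *v w) \<longlongrightarrow> 0) (at s)"
    by (rule Lim_null_comparison)
  then show ?thesis by (rule LIM_zero_cancel)
qed

lemma At_cont2:
  assumes "\<bar>s\<bar> < lam / 2" and f: "(f \<longlongrightarrow> v) (at s)"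
  shows "((\<lambda>t. At t *v f t) \<longlongrightarrow> At s *v v) (at s)"
proof -
  have "eventually (\<lambda>t. norm (At t *v f t - At s *v v) \<le> 2 / lam * norm (f t - v) + norm (At t *v v - At s *v v)) (at s)"
    using ev_near[OF assms(1)]
  proof eventually_elim
    case (elim t)
    have "At t *v f t - At s *v v = At t *v (f t - v) + (At t *v v - At s *v v)"
      by (simp add: matrix_vector_mult_diff_distrib)
    then have "norm (At t *v f t - At s *v v) \<le> norm (At t *v (f t - v)) + norm (At t *v v - At s *v v)"
      by (metis norm_triangle_ineq)
    also have "norm (At t *v (f t - v)) \<le> 2 / lam * norm (f t - v)"
      using At_bound elim by simp
    finally show ?case by simp
  qed
  moreover have "((\<lambda>t. 2 / lam * norm (f t - v) + norm (At t *v v - At s *v v)) \<longlongrightarrow> 0) (at s)"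
  proof -
    have "((\<lambda>t. f t - v) \<longlongrightarrow> 0) (at s)" using f by (rule LIM_zero)
    then have a: "((\<lambda>t. norm (f t - v)) \<longlongrightarrow> 0) (at s)" by (rule tendsto_norm_zero)
    have "((\<lambda>t. At t *v v - At s *v v) \<longlongrightarrow> 0) (at s)" using At_cont[OF assms(1)] by (rule LIM_zero)
    then have b: "((\<lambda>t. norm (At t *v v - At s *v v)) \<longlongrightarrow> 0) (at s)" by (rule tendsto_norm_zero)
    show ?thesis using tendsto_add[OF tendsto_mult_right_zero[OF a, of "2/lam"] b] by simp
  qed
  ultimately have "((\<lambda>t. At t *v f t - At s *v v) \<longlongrightarrow> 0) (at s)"
    by (rule Lim_null_comparison)
  then show ?thesis by (rule LIM_zero_cancel)
qed

lemma E_tendsto: "(f \<longlongrightarrow> v) F \<Longrightarrow> ((\<lambda>t. Emat i j *v f t) \<longlongrightarrow> Emat i j *v v) F"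
  by (rule bounded_linear.tendsto[OF matrix_vector_mul_bounded_linear])

lemma ev_neq: "eventually (\<lambda>t. t \<noteq> s) (at (s::real))"
  by (simp add: eventually_at_filter)

lemma DERIV1:
  assumes "\<bar>s\<bar> < lam / 2"
  shows "((\<lambda>t. lam\<^sup>2 * (norm (At t *v y))\<^sup>2) has_real_derivative
           (- 2 * lam\<^sup>2 * ((At s *v y) \<bullet> (At s *v (Emat i j *v (At s *v y)))))) (at s)"
  unfolding has_field_derivative_iff
proof (rule Lim_transform_eventually)
  let ?X = "\<lambda>t. At t *v (Emat i j *v (At s *v y))"
  let ?Q = "\<lambda>t. - lam\<^sup>2 * (?X t \<bullet> (At t *v y + At s *v y))"
  show "(?Q \<longlongrightarrow> - 2 * lam\<^sup>2 * ((At s *v y) \<bullet> (At s *v (Emat i j *v (At s *v y))))) (at s)"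
  proof (rule tendsto_cong_limit)
    show "(?Q \<longlongrightarrow> - lam\<^sup>2 * (?X s \<bullet> (At s *v y + At s *v y))) (at s)"
      by (intro tendsto_intros At_cont assms)
    show "- 2 * lam\<^sup>2 * ((At s *v y) \<bullet> (At s *v (Emat i j *v (At s *v y)))) = - lam\<^sup>2 * (?X s \<bullet> (At s *v y + At s *v y))"
      unfolding inner_add_right inner_commute[of "At s *v y"] by simp
  qed
  show "eventually (\<lambda>t. ?Q t = (lam\<^sup>2 * (norm (At t *v y))\<^sup>2 - lam\<^sup>2 * (norm (At s *v y))\<^sup>2) / (t - s)) (at s)"
    using ev_near[OF assms] ev_neq[of s]
  proof eventually_elim
    case (elim t)
    have r: "At t *v y - At s *v y = - (t - s) *\<^sub>R ?X t"
      using resolvent[of t s y] assms elim by simp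
    have "(norm (At t *v y))\<^sup>2 - (norm (At s *v y))\<^sup>2 = (At t *v y - At s *v y) \<bullet> (At t *v y + At s *v y)"
      unfolding power2_norm_eq_inner inner_diff_left inner_add_right inner_commute[of "At s *v y" "At t *v y"]
      by simp
    also have "\<dots> = - (t - s) * (?X t \<bullet> (At t *v y + At s *v y))"
      unfolding r inner_scaleR_left by (rule refl)
    finally have calc: "(norm (At t *v y))\<^sup>2 - (norm (At s *v y))\<^sup>2 = - (t - s) * (?X t \<bullet> (At t *v y + At s *v y))" .
    have ring: "p * n1 - p * n2 = (t - s) * (- p * Z)" if "n1 - n2 = - (t - s) * Z" for n1 n2 Z p :: real
    proof -
      have "p * n1 - p * n2 = p * (n1 - n2)" by (simp add: algebra_simps)
      also have "\<dots> = (t - s) * (- p * Z)" unfolding that by (simp add: algebra_simps)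
      finally show ?thesis .
    qed
    have "lam\<^sup>2 * (norm (At t *v y))\<^sup>2 - lam\<^sup>2 * (norm (At s *v y))\<^sup>2 = (t - s) * ?Q t"
      by (rule ring[OF calc])
    then show ?case using elim by simp
  qed
qed

lemma DERIV2:
  fixes y :: "real^'n"
  defines "E \<equiv> Emat i j"
  defines "a0 \<equiv> At 0 *v y"
  defines "b0 \<equiv> At 0 *v a0"
  defines "w0 \<equiv> E *v a0"
  shows "((\<lambda>t. - 2 * lam\<^sup>2 * ((At t *v y) \<bullet> (At t *v (E *v (At t *v y))))) has_real_derivative
           (2 * lam\<^sup>2 * ((At 0 *v (At 0 *v w0) + At 0 *v (E *v b0)) \<bullet> (E *v a0) + b0 \<bullet> (E *v (At 0 *v w0))))) (at 0)"
  unfolding has_field_derivative_iff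
proof (rule Lim_transform_eventually)
  have l0: "\<bar>0::real\<bar> < lam / 2" using lam by simp
  let ?Y = "\<lambda>t. At t *v w0"
  let ?X = "\<lambda>t. At t *v (At t *v w0) + At t *v (E *v b0)"
  let ?Q = "\<lambda>t. 2 * lam\<^sup>2 * (?X t \<bullet> (E *v (At t *v y)) + b0 \<bullet> (E *v ?Y t))"
  show "(?Q \<longlongrightarrow> 2 * lam\<^sup>2 * ((At 0 *v (At 0 *v w0) + At 0 *v (E *v b0)) \<bullet> (E *v a0) + b0 \<bullet> (E *v (At 0 *v w0)))) (at 0)"
    unfolding E_def a0_def
    by (intro tendsto_intros At_cont At_cont2 E_tendsto l0)
  let ?G = "\<lambda>t. - 2 * lam\<^sup>2 * ((At t *v y) \<bullet> (At t *v (E *v (At t *v y))))"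
  show "eventually (\<lambda>t. ?Q t = (?G t - ?G 0) / (t - 0)) (at 0)"
    using ev_near[OF l0] ev_neq[of 0]
  proof eventually_elim
    case (elim t)
    have tl: "\<bar>t\<bar> \<le> lam / 2" using elim by simp
    have l0': "\<bar>0::real\<bar> \<le> lam / 2" using lam by simp
    define a_t where "a_t = At t *v y"
    define b_t where "b_t = At t *v a_t"
    have ra: "a_t - a0 = - t *\<^sub>R ?Y t"
      using resolvent[OF tl l0', of y] unfolding a_t_def a0_def w0_def E_def by simp
    have rb: "b_t - b0 = - t *\<^sub>R ?X t"
    proof -
      have "b_t - b0 = At t *v (a_t - a0) + (At t *v a0 - At 0 *v a0)"
        unfolding b_t_def b0_def by (simp add: matrix_vector_mult_diff_distrib)
      also have "At t *v a0 - At 0 *v a0 = - t *\<^sub>R (At t *v (E *v b0))"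
        using resolvent[OF tl l0', of a0] unfolding b0_def E_def by simp
      finally show ?thesis unfolding ra by (simp only: matrix_vector_mult_scaleR scaleR_right_distrib)
    qed
    have Gt: "?G t = - 2 * lam\<^sup>2 * (b_t \<bullet> (E *v a_t))"
      unfolding b_t_def a_t_def using At_sym[OF tl] by simp
    have G0: "?G 0 = - 2 * lam\<^sup>2 * (b0 \<bullet> (E *v a0))"
      unfolding b0_def a0_def using At_sym[OF l0'] by simp
    have "b_t \<bullet> (E *v a_t) - b0 \<bullet> (E *v a0) = (b_t - b0) \<bullet> (E *v a_t) + b0 \<bullet> (E *v (a_t - a0))"
      by (simp add: inner_diff_left inner_diff_right matrix_vector_mult_diff_distrib)
    also have "\<dots> = - t * (?X t \<bullet> (E *v a_t) + b0 \<bullet> (E *v ?Y t))"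
      unfolding ra rb matrix_vector_mult_scaleR inner_scaleR_left inner_scaleR_right
      by (simp only: distrib_left)
    finally have c: "b_t \<bullet> (E *v a_t) - b0 \<bullet> (E *v a0) = - t * (?X t \<bullet> (E *v a_t) + b0 \<bullet> (E *v ?Y t))" .
    have ring: "- 2 * p * x - - 2 * p * z = - 2 * p * (x - z)" for p x z :: real
      by (simp add: algebra_simps)
    have ring2: "- 2 * p * (- t * q) = t * (2 * p * q)" for p q :: real
      by (simp add: algebra_simps)
    have "?G t - ?G 0 = - 2 * lam\<^sup>2 * (b_t \<bullet> (E *v a_t) - b0 \<bullet> (E *v a0))"
      unfolding Gt G0 by (rule ring)
    also have "\<dots> = t * ?Q t"
      unfolding c unfolding a_t_def by (rule ring2)
    finally show ?case using elim by simp
  qed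
qed

lemma At_entry_sym:
  assumes "\<bar>t\<bar> \<le> lam / 2"
  shows "At t $ p $ q = At t $ q $ p"
proof -
  have "At t $ p $ q = axis p 1 \<bullet> (At t *v axis q 1)" by (simp add: inner_axis' mv_axis)
  also have "\<dots> = (At t *v axis p 1) \<bullet> axis q 1" by (rule At_sym[OF assms])
  also have "\<dots> = At t $ q $ p" by (simp add: inner_axis mv_axis)
  finally show ?thesis .
qed

lemma At0_entry: "\<bar>At 0 $ p $ q\<bar> \<le> 1 / lam"
proof -
  have "\<bar>At 0 $ p $ q\<bar> = \<bar>(At 0 *v axis q 1) $ p\<bar>" by (simp add: mv_axis)
  also have "\<dots> \<le> norm (At 0 *v axis q 1)" by (rule component_le_norm_cart)
  also have "\<dots> \<le> 1 / lam" using At_bound0[of "axis q 1"] by simp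
  finally show ?thesis .
qed

lemma main:
  fixes y :: "real^'n"
  shows "((\<lambda>t. L_tr lam y (K + t *\<^sub>R Emat i j)) has_real_derivative
            (- 2 * lam\<^sup>2 * (krr_beta lam y K $ i * krr_alpha lam y K $ j
                              + krr_beta lam y K $ j * krr_alpha lam y K $ i))) (at 0)
       \<and> (deriv (\<lambda>t. L_tr lam y (K + t *\<^sub>R Emat i j)) has_real_derivative
            (H_tilde lam y K i j + R_term lam y K i j)) (at 0)
       \<and> H_tilde lam y K i j \<ge> 0
       \<and> \<bar>R_term lam y K i j\<bar>
           \<le> 8 * norm y / lam * (\<bar>krr_alpha lam y K $ i\<bar> + \<bar>krr_alpha lam y K $ j\<bar>)
       \<and> (krr_alpha lam y K $ i = 0 \<and> krr_alpha lam y K $ j = 0 \<longrightarrow>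
            H_tilde lam y K i j = 0 \<and> R_term lam y K i j = 0)"
proof -
  define E where "E = Emat i j"
  define A where "A = At 0"
  define a where "a = A *v y"
  define b where "b = A *v a"
  define w where "w = E *v a"
  have l0: "\<bar>0::real\<bar> < lam / 2" using lam by simp
  have l0': "\<bar>0::real\<bar> \<le> lam / 2" using lam by simp
  have fL: "(\<lambda>t. L_tr lam y (K + t *\<^sub>R Emat i j)) = (\<lambda>t. lam\<^sup>2 * (norm (At t *v y))\<^sup>2)"
    by (simp add: L_tr_def krr_alpha_def krr_A_def At_def Mt_def fun_eq_iff)
  have kA: "krr_A lam K = A" by (simp add: krr_A_def A_def At_def Mt_def)
  have ka: "krr_alpha lam y K = a" by (simp add: krr_alpha_def kA a_def)
  have kb: "krr_beta lam y K = b" by (simp add: krr_beta_def kA ka b_def)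
  have Hdef: "H_tilde lam y K i j = 2 * lam\<^sup>2 * (norm (A *v w))\<^sup>2"
    by (simp add: H_tilde_def kA ka w_def E_def)
  have Rdef: "R_term lam y K i j = 4 * lam\<^sup>2 * (A $ i $ j * (b $ i * a $ j + b $ j * a $ i)
                  + A $ i $ i * b $ j * a $ j + A $ j $ j * b $ i * a $ i)"
    by (simp add: R_term_def kA ka kb Let_def)
  have Asym: "u \<bullet> (A *v v) = (A *v u) \<bullet> v" for u v unfolding A_def by (rule At_sym[OF l0'])
  have Esym: "(E *v u) \<bullet> v = u \<bullet> (E *v v)" for u v unfolding E_def by (rule Emat_sym[OF ij])
  have Aij: "A $ j $ i = A $ i $ j" unfolding A_def by (rule At_entry_sym[OF l0'])
  have d1: "((\<lambda>t. L_tr lam y (K + t *\<^sub>R Emat i j)) has_real_derivative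
            (- 2 * lam\<^sup>2 * (b $ i * a $ j + b $ j * a $ i))) (at 0)"
  proof -
    have "a \<bullet> (A *v (E *v a)) = b \<bullet> (E *v a)" using Asym b_def by simp
    also have "\<dots> = b $ i * a $ j + b $ j * a $ i" unfolding E_def by (rule Emat_inner[OF ij])
    finally have e: "a \<bullet> (A *v (E *v a)) = b $ i * a $ j + b $ j * a $ i" .
    have D: "((\<lambda>t. lam\<^sup>2 * (norm (At t *v y))\<^sup>2) has_real_derivative (- 2 * lam\<^sup>2 * (a \<bullet> (A *v (E *v a))))) (at 0)"
      using DERIV1[OF l0, of y] unfolding a_def A_def E_def .
    show ?thesis using D unfolding fL e .
  qed
  let ?G = "\<lambda>t. - 2 * lam\<^sup>2 * ((At t *v y) \<bullet> (At t *v (Emat i j *v (At t *v y))))"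
  have d2: "(deriv (\<lambda>t. L_tr lam y (K + t *\<^sub>R Emat i j)) has_real_derivative
            (H_tilde lam y K i j + R_term lam y K i j)) (at 0)"
  proof (rule has_field_derivative_transform_within_open)
    show "open (ball (0::real) (lam/2))" by simp
    show "(0::real) \<in> ball 0 (lam/2)" using lam by simp
    show "?G t = deriv (\<lambda>t. L_tr lam y (K + t *\<^sub>R Emat i j)) t" if "t \<in> ball 0 (lam/2)" for t
    proof -
      have "\<bar>t\<bar> < lam / 2" using that by (simp add: dist_real_def)
      from DERIV_imp_deriv[OF DERIV1[OF this, of y]] show ?thesis unfolding fL by simp
    qed
    have val: "2 * lam\<^sup>2 * ((A *v (A *v w) + A *v (E *v b)) \<bullet> (E *v a) + b \<bullet> (E *v (A *v w)))
          = H_tilde lam y K i j + R_term lam y K i j"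
    proof -
      have e1: "(A *v (A *v w)) \<bullet> w = (norm (A *v w))\<^sup>2"
        using Asym[of w "A *v w"] by (simp add: inner_commute power2_norm_eq_inner)
      have e2: "(A *v (E *v b)) \<bullet> w = b \<bullet> (E *v (A *v w))"
        using Asym[of w "E *v b"] Esym[of b "A *v w"] by (simp add: inner_commute)
      have e3: "b \<bullet> (E *v (A *v w)) = A $ i $ j * (b $ i * a $ j + b $ j * a $ i)
                  + A $ i $ i * b $ j * a $ j + A $ j $ j * b $ i * a $ i"
        unfolding E_def w_def Emat_inner[OF ij] mv_E_entry[OF ij] Aij
        by (simp add: algebra_simps)
      show ?thesis unfolding w_def[symmetric] inner_add_left e1 e2 e3 Hdef Rdef
        by (simp add: algebra_simps)
    qed
    show "(?G has_real_derivative H_tilde lam y K i j + R_term lam y K i j) (at 0)"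
      using DERIV2[of y] unfolding val[symmetric] A_def b_def a_def w_def E_def by simp
  qed
  have bnd: "\<bar>R_term lam y K i j\<bar> \<le> 8 * norm y / lam * (\<bar>a $ i\<bar> + \<bar>a $ j\<bar>)"
  proof -
    let ?c = "1 / lam" and ?B = "norm y / lam\<^sup>2"
    have na: "norm a \<le> norm y / lam" unfolding a_def A_def by (rule At_bound0)
    have "norm b \<le> norm a / lam" unfolding b_def A_def by (rule At_bound0)
    also have "\<dots> \<le> norm y / lam / lam" using na lam by (intro divide_right_mono) auto
    finally have nb: "norm b \<le> ?B" by (simp add: power2_eq_square)
    have bk: "\<bar>b $ k\<bar> \<le> ?B" for k using component_le_norm_cart[of b k] nb by linarith
    have Ak: "\<bar>A $ p $ q\<bar> \<le> ?c" for p q unfolding A_def by (rule At0_entry)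
    have t1: "\<bar>A $ i $ j * (b $ i * a $ j)\<bar> \<le> ?c * ?B * \<bar>a $ j\<bar>" by (rule prod_bound[OF Ak bk])
    have t2: "\<bar>A $ i $ j * (b $ j * a $ i)\<bar> \<le> ?c * ?B * \<bar>a $ i\<bar>" by (rule prod_bound[OF Ak bk])
    have t3: "\<bar>A $ i $ i * (b $ j * a $ j)\<bar> \<le> ?c * ?B * \<bar>a $ j\<bar>" by (rule prod_bound[OF Ak bk])
    have t4: "\<bar>A $ j $ j * (b $ i * a $ i)\<bar> \<le> ?c * ?B * \<bar>a $ i\<bar>" by (rule prod_bound[OF Ak bk])
    have T: "\<bar>A $ i $ j * (b $ i * a $ j + b $ j * a $ i) + A $ i $ i * b $ j * a $ j + A $ j $ j * b $ i * a $ i\<bar>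
             \<le> 2 * (?c * ?B) * (\<bar>a $ i\<bar> + \<bar>a $ j\<bar>)"
    proof -
      have X: "A $ i $ j * (b $ i * a $ j + b $ j * a $ i) + A $ i $ i * b $ j * a $ j + A $ j $ j * b $ i * a $ i
           = A $ i $ j * (b $ i * a $ j) + A $ i $ j * (b $ j * a $ i) + A $ i $ i * (b $ j * a $ j) + A $ j $ j * (b $ i * a $ i)"
        by (simp add: algebra_simps)
      have tri: "\<bar>p1 + p2 + p3 + p4\<bar> \<le> \<bar>p1\<bar> + \<bar>p2\<bar> + \<bar>p3\<bar> + \<bar>p4\<bar>" for p1 p2 p3 p4 :: real
        by arith
      have Y: "2 * (?c * ?B) * (\<bar>a $ i\<bar> + \<bar>a $ j\<bar>) = ?c * ?B * \<bar>a $ j\<bar> + ?c * ?B * \<bar>a $ i\<bar> + ?c * ?B * \<bar>a $ j\<bar> + ?c * ?B * \<bar>a $ i\<bar>"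
        by (simp add: algebra_simps add_divide_distrib)
      show ?thesis unfolding X Y
        using tri[of "A $ i $ j * (b $ i * a $ j)" "A $ i $ j * (b $ j * a $ i)" "A $ i $ i * (b $ j * a $ j)" "A $ j $ j * (b $ i * a $ i)"] t1 t2 t3 t4
        by linarith
    qed
    have "\<bar>R_term lam y K i j\<bar> = 4 * lam\<^sup>2 * \<bar>A $ i $ j * (b $ i * a $ j + b $ j * a $ i) + A $ i $ i * b $ j * a $ j + A $ j $ j * b $ i * a $ i\<bar>"
      unfolding Rdef by (simp add: abs_mult)
    also have "\<dots> \<le> 4 * lam\<^sup>2 * (2 * (?c * ?B) * (\<bar>a $ i\<bar> + \<bar>a $ j\<bar>))"
      by (rule mult_left_mono[OF T]) simp
    also have "\<dots> = 8 * norm y / lam * (\<bar>a $ i\<bar> + \<bar>a $ j\<bar>)"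
      using lam by (simp add: field_simps power2_eq_square)
    finally show ?thesis .
  qed
  have van: "a $ i = 0 \<and> a $ j = 0 \<longrightarrow> H_tilde lam y K i j = 0 \<and> R_term lam y K i j = 0"
  proof
    assume z: "a $ i = 0 \<and> a $ j = 0"
    then have "w = 0" unfolding w_def E_def by (simp add: Emat_mult[OF ij] vec_eq_iff)
    then show "H_tilde lam y K i j = 0 \<and> R_term lam y K i j = 0"
      unfolding Hdef Rdef using z by simp
  qed
  have hpos: "0 \<le> H_tilde lam y K i j" by (simp add: Hdef)
  show ?thesis unfolding ka kb using d1 d2 hpos bnd van by (intro conjI) assumption+
qed

end

theorem lemma1:
  fixes K :: "real^'n^'n" and y :: "real^'n" and lam :: real and i j :: 'n
  assumes "CARD('n) \<ge> 2"
    and "psd_sym K"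
    and "lam > 0"
    and "i \<noteq> j"
  shows "((\<lambda>t. L_tr lam y (K + t *\<^sub>R Emat i j)) has_real_derivative
            (- 2 * lam\<^sup>2 * (krr_beta lam y K $ i * krr_alpha lam y K $ j
                              + krr_beta lam y K $ j * krr_alpha lam y K $ i))) (at 0)
       \<and> (deriv (\<lambda>t. L_tr lam y (K + t *\<^sub>R Emat i j)) has_real_derivative
            (H_tilde lam y K i j + R_term lam y K i j)) (at 0)
       \<and> H_tilde lam y K i j \<ge> 0
       \<and> \<bar>R_term lam y K i j\<bar>
           \<le> 8 * norm y / lam * (\<bar>krr_alpha lam y K $ i\<bar> + \<bar>krr_alpha lam y K $ j\<bar>)
       \<and> (krr_alpha lam y K $ i = 0 \<and> krr_alpha lam y K $ j = 0 \<longrightarrow>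
            H_tilde lam y K i j = 0 \<and> R_term lam y K i j = 0)"
  by (rule main[OF assms(2) assms(3) assms(4)])

end
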